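(* Let $\Omega$ be a bounded domain in $\mathbb{R}^n$, $p\geq 1$, and let $f$ satisfy the standing assumptions. Let $\nu\in\mathcal{P}(\Omega)$ be of the form $\nu=\nu^s+v\cdot\mathcal{L}^n$ with $\nu^s\perp\mathcal{L}^n$, $v\in L^\infty(\Omega)$ and $v>0$ a.e. in $\Omega$. If $\mu=u\cdot\mathcal{L}^n$ minimizes $\mathfrak{F}^p_\nu$ over $\mathcal{P}(\Omega)$, then $u>0$ a.e. in $\Omega$.
   Context: A bounded domain is a bounded set $\Omega\subset\mathbb{R}^n$ which is the closure of a nonempty connected open set and whose boundary is Lebesgue-negligible. $\mathcal{P}(\Omega)$ is the set of Borel probability measures on $\Omega$. Standing assumptions on $f$: $f:[0,+\infty)\to[0,+\infty)$ is strictly convex and $C^1$, $f(0)=0$, $f'(0)=0$, and $\lim_{t\to+\infty}f(t)/t=+\infty$. $T_p(\mu,\nu)=\inf_\gamma\int|x-y|^p\,d\gamma$ over transport plans $\gamma$ (probability measures on $\Omega\times\Omega$ with marginals $\mu,\nu$). $F(\mu)=\int_\Omega f(u)\,dx$ if $\mu=u\cdot\mathcal{L}^n$, $+\infty$ otherwise. $\mathfrak{F}^p_\nu(\mu)=T_p(\mu,\nu)+F(\mu)$. *)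

theory Defs
  imports "HOL-Analysis.Analysis" "HOL-Probability.Probability"
begin

definition strictly_convex_on :: "real set \<Rightarrow> (real \<Rightarrow> real) \<Rightarrow> bool" where
  "strictly_convex_on S f \<longleftrightarrow>
     (\<forall>x\<in>S. \<forall>y\<in>S. x \<noteq> y \<longrightarrow>
        (\<forall>t::real. 0 < t \<and> t < 1 \<longrightarrow> f ((1 - t) * x + t * y) < (1 - t) * f x + t * f y))"

definition bounded_domain :: "'a::euclidean_space set \<Rightarrow> bool" where
  "bounded_domain \<Omega> \<longleftrightarrow> bounded \<Omega> \<and>
     (\<exists>U. open U \<and> connected U \<and> U \<noteq> {} \<and> \<Omega> = closure U) \<and>
     frontier \<Omega> \<in> null_sets lborel"

definition standing_f :: "(real \<Rightarrow> real) \<Rightarrow> bool" where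
  "standing_f f \<longleftrightarrow>
     (\<forall>t\<ge>0. f t \<ge> 0) \<and> strictly_convex_on {0..} f \<and>
     (\<exists>f'. (\<forall>t\<ge>0. (f has_real_derivative f' t) (at t within {0..})) \<and>
           continuous_on {0..} f' \<and> f' 0 = 0) \<and>
     f 0 = 0 \<and> filterlim (\<lambda>t. f t / t) at_top at_top"

text \<open>Borel probability measures on \<Omega>, represented as Borel probability measures
  on the ambient space concentrated on \<Omega>.\<close>
definition probs_on :: "'a::euclidean_space set \<Rightarrow> 'a measure set" where
  "probs_on \<Omega> = {\<mu>. sets \<mu> = sets borel \<and> prob_space \<mu> \<and> emeasure \<mu> (UNIV - \<Omega>) = 0}"

definition transport_plans :: "'a::euclidean_space measure \<Rightarrow> 'a measure \<Rightarrow> ('a \<times> 'a) measure set" where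
  "transport_plans \<mu> \<nu> = {\<gamma>. sets \<gamma> = sets borel \<and> prob_space \<gamma> \<and>
      distr \<gamma> borel fst = \<mu> \<and> distr \<gamma> borel snd = \<nu>}"

definition Tp :: "real \<Rightarrow> 'a::euclidean_space measure \<Rightarrow> 'a measure \<Rightarrow> ennreal" where
  "Tp p \<mu> \<nu> = (INF \<gamma> \<in> transport_plans \<mu> \<nu>.
      \<integral>\<^sup>+ z. ennreal (dist (fst z) (snd z) powr p) \<partial>\<gamma>)"

text \<open>Internal energy: \<integral>_\<Omega> f(u) dx if \<mu> = u L^n, +\<infinity> otherwise
  (infimum over the empty set of densities is \<infinity>).\<close>
definition Fen :: "(real \<Rightarrow> real) \<Rightarrow> 'a::euclidean_space set \<Rightarrow> 'a measure \<Rightarrow> ennreal" where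
  "Fen f \<Omega> \<mu> = (INF u \<in> {u. u \<in> borel_measurable lborel \<and> (\<forall>x. u x \<ge> 0) \<and>
                         \<mu> = density lborel (\<lambda>x. ennreal (u x))}.
      \<integral>\<^sup>+ x. indicator \<Omega> x * ennreal (f (u x)) \<partial>lborel)"

definition functional :: "real \<Rightarrow> (real \<Rightarrow> real) \<Rightarrow> 'a::euclidean_space set \<Rightarrow> 'a measure \<Rightarrow> 'a measure \<Rightarrow> ennreal" where
  "functional p f \<Omega> \<nu> \<mu> = Tp p \<mu> \<nu> + Fen f \<Omega> \<mu>"

definition singular_lebesgue :: "'a::euclidean_space measure \<Rightarrow> bool" where
  "singular_lebesgue \<nu>s \<longleftrightarrow> (\<exists>N \<in> sets borel. N \<in> null_sets lborel \<and> emeasure \<nu>s (UNIV - N) = 0)"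

end

theory Submission
  imports Defs
begin


lemma meas_fst: "fst \<in> measurable (borel::('a::euclidean_space\<times>'a) measure) (borel::'a measure)"
  by (intro borel_measurable_continuous_onI continuous_intros)
lemma meas_snd: "snd \<in> measurable (borel::('a::euclidean_space\<times>'a) measure) (borel::'a measure)"
  by (intro borel_measurable_continuous_onI continuous_intros)
declare meas_fst[measurable] meas_snd[measurable]
lemma meas_dist: "(\<lambda>z. dist (fst z) (snd z) powr p) \<in> borel_measurable (borel::('a::euclidean_space\<times>'a) measure)"
  by measurable

lemma (in prob_space) distr_pair_snd': assumes "sigma_finite_measure N" shows "distr (M \<Otimes>\<^sub>M N) N snd = N"
proof (intro measure_eqI)
  interpret N: sigma_finite_measure N by fact
  fix A assume A: "A \<in> sets (distr (M \<Otimes>\<^sub>M N) N snd)"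
  from A have "emeasure (distr (M \<Otimes>\<^sub>M N) N snd) A = emeasure (M \<Otimes>\<^sub>M N) (space M \<times> A)"
    by (auto simp add: emeasure_distr space_pair_measure dest: sets.sets_into_space intro!: arg_cong2[where f=emeasure])
  also have "\<dots> = emeasure M (space M) * emeasure N A"
    using A by (intro N.emeasure_pair_measure_Times) auto
  finally show "emeasure (distr (M \<Otimes>\<^sub>M N) N snd) A = emeasure N A"
    by (simp add: emeasure_space_1)
qed simp

lemma plan_AE:
  assumes "\<gamma> \<in> transport_plans \<mu> \<nu>" "\<mu> \<in> probs_on \<Omega>" "\<nu> \<in> probs_on \<Omega>" "\<Omega> \<in> sets borel"
  shows "AE z in \<gamma>. fst z \<in> \<Omega> \<and> snd z \<in> \<Omega>"
proof -
  have sg: "sets \<gamma> = sets borel" and d1: "distr \<gamma> borel fst = \<mu>" and d2: "distr \<gamma> borel snd = \<nu>"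
    using assms(1) by (auto simp: transport_plans_def)
  have sp: "space \<gamma> = UNIV" using sets_eq_imp_space_eq[OF sg] by simp
  have mf: "fst \<in> measurable \<gamma> borel" using meas_fst measurable_cong_sets[OF sg refl] by blast
  have ms: "snd \<in> measurable \<gamma> borel" using meas_snd measurable_cong_sets[OF sg refl] by blast
  have "emeasure \<gamma> (fst -` (UNIV - \<Omega>) \<inter> space \<gamma>) = emeasure \<mu> (UNIV - \<Omega>)"
    using d1 emeasure_distr[OF mf, of "UNIV - \<Omega>"] assms(4) by auto
  also have "\<dots> = 0" using assms(2) by (simp add: probs_on_def)
  finally have e1: "emeasure \<gamma> (fst -` (UNIV - \<Omega>) \<inter> space \<gamma>) = 0" .
  moreover have "fst -` (UNIV-\<Omega>) \<in> sets \<gamma>" using measurable_sets[OF mf, of "UNIV-\<Omega>"] assms(4) by (simp add: sp)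
  ultimately have 1: "AE z in \<gamma>. fst z \<in> \<Omega>"
    using assms(4) mf by (intro AE_I[where N="fst -` (UNIV - \<Omega>) \<inter> space \<gamma>"]) (auto simp: sp)
  have "emeasure \<gamma> (snd -` (UNIV - \<Omega>) \<inter> space \<gamma>) = emeasure \<nu> (UNIV - \<Omega>)"
    using d2 emeasure_distr[OF ms, of "UNIV - \<Omega>"] assms(4) by auto
  also have "\<dots> = 0" using assms(3) by (simp add: probs_on_def)
  finally have e2: "emeasure \<gamma> (snd -` (UNIV - \<Omega>) \<inter> space \<gamma>) = 0" .
  moreover have "snd -` (UNIV-\<Omega>) \<in> sets \<gamma>" using measurable_sets[OF ms, of "UNIV-\<Omega>"] assms(4) by (simp add: sp)
  ultimately have 2: "AE z in \<gamma>. snd z \<in> \<Omega>"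
    using assms(4) ms by (intro AE_I[where N="snd -` (UNIV - \<Omega>) \<inter> space \<gamma>"]) (auto simp: sp)
  from 1 2 show ?thesis by auto
qed

lemma cost_bound:
  assumes "\<gamma> \<in> transport_plans \<mu> \<nu>" "\<mu> \<in> probs_on \<Omega>" "\<nu> \<in> probs_on \<Omega>" "\<Omega> \<in> sets borel"
    "bounded \<Omega>" "p \<ge> 0"
  shows "(\<integral>\<^sup>+ z. ennreal (dist (fst z) (snd z) powr p) \<partial>\<gamma>) \<le> ennreal (diameter \<Omega> powr p)"
proof -
  interpret prob_space \<gamma> using assms(1) by (simp add: transport_plans_def)
  have "(\<integral>\<^sup>+ z. ennreal (dist (fst z) (snd z) powr p) \<partial>\<gamma>) \<le> (\<integral>\<^sup>+ z. ennreal (diameter \<Omega> powr p) \<partial>\<gamma>)"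
  proof (rule nn_integral_mono_AE)
    show "AE z in \<gamma>. ennreal (dist (fst z) (snd z) powr p) \<le> ennreal (diameter \<Omega> powr p)"
      using plan_AE[OF assms(1-4)]
    proof eventually_elim
      case (elim z)
      then have "dist (fst z) (snd z) \<le> diameter \<Omega>" using diameter_bounded_bound[OF assms(5)] by auto
      then show ?case using assms(6) by (intro ennreal_leI powr_mono2) auto
    qed
  qed
  also have "\<dots> = ennreal (diameter \<Omega> powr p)" by (simp add: emeasure_space_1)
  finally show ?thesis .
qed

lemma Tp_bound:
  assumes "\<mu> \<in> probs_on \<Omega>" "\<nu> \<in> probs_on \<Omega>" "\<Omega> \<in> sets borel" "bounded \<Omega>" "p \<ge> 0"
  shows "Tp p \<mu> \<nu> \<le> ennreal (diameter \<Omega> powr p)"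
proof -
  interpret m: prob_space \<mu> using assms(1) by (simp add: probs_on_def)
  interpret n: prob_space \<nu> using assms(2) by (simp add: probs_on_def)
  interpret pair_prob_space \<mu> \<nu> ..
  have sm: "sets \<mu> = sets borel" and sn: "sets \<nu> = sets borel" using assms by (auto simp: probs_on_def)
  have sp: "sets (\<mu> \<Otimes>\<^sub>M \<nu>) = sets (borel::('a\<times>'a) measure)"
    using sets_pair_measure_cong[OF sm sn] borel_prod by metis
  have "distr (\<mu> \<Otimes>\<^sub>M \<nu>) borel fst = distr (\<mu> \<Otimes>\<^sub>M \<nu>) \<mu> fst"
    by (rule distr_cong) (auto simp: sm)
  also have "\<dots> = \<mu>" by (rule n.distr_pair_fst)
  finally have 1: "distr (\<mu> \<Otimes>\<^sub>M \<nu>) borel fst = \<mu>" .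
  have "distr (\<mu> \<Otimes>\<^sub>M \<nu>) borel snd = distr (\<mu> \<Otimes>\<^sub>M \<nu>) \<nu> snd"
    by (rule distr_cong) (auto simp: sn)
  also have "\<dots> = \<nu>" by (rule m.distr_pair_snd'[OF n.sigma_finite_measure_axioms])
  finally have 2: "distr (\<mu> \<Otimes>\<^sub>M \<nu>) borel snd = \<nu>" .
  have pl: "\<mu> \<Otimes>\<^sub>M \<nu> \<in> transport_plans \<mu> \<nu>"
    using sp 1 2 prob_space_pair[OF m.prob_space_axioms n.prob_space_axioms]
    by (simp add: transport_plans_def)
  have "Tp p \<mu> \<nu> \<le> (\<integral>\<^sup>+ z. ennreal (dist (fst z) (snd z) powr p) \<partial>(\<mu> \<Otimes>\<^sub>M \<nu>))"
    unfolding Tp_def by (rule INF_lower[OF pl])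
  also have "\<dots> \<le> ennreal (diameter \<Omega> powr p)" by (rule cost_bound[OF pl assms])
  finally show ?thesis .
qed




lemma f_props:
  assumes "standing_f f"
  shows "f 0 = 0" "\<And>t. t \<ge> 0 \<Longrightarrow> f t \<ge> 0"
    "\<And>x y. 0 \<le> x \<Longrightarrow> x \<le> y \<Longrightarrow> f x \<le> f y"
    "\<And>\<eta>. \<eta> > 0 \<Longrightarrow> \<exists>d>0. \<forall>t. 0 < t \<and> t < d \<longrightarrow> f t \<le> \<eta> * t"
proof -
  from assms obtain f' where d: "\<forall>t\<ge>0. (f has_real_derivative f' t) (at t within {0..})"
    and f'0: "f' 0 = 0" and f0: "f 0 = 0" and nn: "\<forall>t\<ge>0. f t \<ge> 0"
    and cv: "strictly_convex_on {0..} f"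
    unfolding standing_f_def by blast
  show "f 0 = 0" by fact
  show "\<And>t. t \<ge> 0 \<Longrightarrow> f t \<ge> 0" using nn by simp
  show "f x \<le> f y" if "0 \<le> x" "x \<le> y" for x y
  proof (cases "x = 0 \<or> x = y")
    case True then show ?thesis using f0 nn[rule_format, of y] that by auto
  next
    case False
    then have xy: "0 < x" "x < y" using that by auto
    define t where "t = x / y"
    have t: "0 < t" "t < 1" using xy by (auto simp: t_def)
    have "(1 - t) * 0 + t * y = x" using xy by (simp add: t_def)
    moreover have "f ((1 - t) * 0 + t * y) < (1 - t) * f 0 + t * f y"
      using cv[unfolded strictly_convex_on_def, rule_format, of 0 y t] t xy by auto
    ultimately have "f x < t * f y" using f0 by simp
    also have "\<dots> \<le> f y" using t nn[rule_format, of y] xy by (intro mult_left_le_one_le) auto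
    finally show ?thesis by simp
  qed
  show "\<exists>d>0. \<forall>t. 0 < t \<and> t < d \<longrightarrow> f t \<le> \<eta> * t" if "\<eta> > 0" for \<eta>
  proof -
    have "((\<lambda>y. (f y - f 0) / (y - 0)) \<longlongrightarrow> 0) (at 0 within {0..})"
    proof -
      have "(f has_real_derivative f' 0) (at 0 within {0..})" using d by simp
      then show ?thesis unfolding has_field_derivative_iff f'0 .
    qed
    then have "\<forall>\<^sub>F y in at 0 within {0..}. dist ((f y - f 0) / (y - 0)) 0 < \<eta>"
      using that by (rule tendstoD)
    then obtain d where d: "d > 0" "\<And>y. y \<in> {0..} \<Longrightarrow> y \<noteq> 0 \<Longrightarrow> dist y 0 < d \<Longrightarrow> dist ((f y - f 0) / (y - 0)) 0 < \<eta>"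
      unfolding eventually_at by (auto simp del: dist_real_def)
    show ?thesis
    proof (intro exI[of _ d] conjI allI impI)
      fix t assume t: "0 < t \<and> t < d"
      have "dist ((f t - f 0) / (t - 0)) 0 < \<eta>" using d(2)[of t] t by simp
      then have "\<bar>f t / t\<bar> < \<eta>" by (simp only: dist_real_def f0 diff_zero)
      then have "f t / t \<le> \<eta>" using abs_ge_self[of "f t / t"] by linarith
      then show "f t \<le> \<eta> * t" using t by (simp add: divide_le_eq mult.commute)
    qed (fact d)
  qed
qed

lemma AE_le_from_integrals:
  fixes f g :: "'a \<Rightarrow> ennreal"
  assumes borel: "f \<in> borel_measurable M" "g \<in> borel_measurable M"
  and g_fin: "integral\<^sup>N M g \<noteq> \<infinity>"
  and le: "\<And>A. A \<in> sets M \<Longrightarrow> (\<integral>\<^sup>+ x. f x * indicator A x \<partial>M) \<le> (\<integral>\<^sup>+ x. g x * indicator A x \<partial>M)"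
  shows "AE x in M. f x \<le> g x"
proof -
  let ?P = "\<lambda>f A. \<integral>\<^sup>+ x. f x * indicator A x \<partial>M"
  let ?N = "{x\<in>space M. g x < f x}"
  have N: "?N \<in> sets M" using borel by simp
  have "?P g ?N \<le> integral\<^sup>N M g"
    by (intro nn_integral_mono_AE) (auto split: split_indicator)
  then have Pg_fin: "?P g ?N \<noteq> \<infinity>" using g_fin by (auto simp: top_unique)
  have "?P (\<lambda>x. (f x - g x)) ?N = (\<integral>\<^sup>+x. f x * indicator ?N x - g x * indicator ?N x \<partial>M)"
    by (auto intro!: nn_integral_cong simp: indicator_def)
  also have "\<dots> = ?P f ?N - ?P g ?N"
  proof (rule nn_integral_diff)
    show "(\<lambda>x. f x * indicator ?N x) \<in> borel_measurable M" "(\<lambda>x. g x * indicator ?N x) \<in> borel_measurable M"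
      using borel N by auto
    show "AE x in M. g x * indicator ?N x \<le> f x * indicator ?N x"
      by (auto split: split_indicator)
  qed fact
  also have "\<dots> = 0"
  proof -
    have "?P f ?N < \<top>" using le[OF N] Pg_fin by (simp add: le_less_trans less_top)
    then show ?thesis using le[OF N] by (simp add: diff_eq_0_iff_ennreal)
  qed
  finally show "AE x in M. f x \<le> g x"
    using borel nn_integral_PInf_AE[OF borel(2) g_fin]
    by (subst (asm) nn_integral_0_iff_AE)
       (auto split: split_indicator simp: not_less ennreal_minus_eq_0)
qed



definition wt :: "real \<Rightarrow> 'a set \<Rightarrow> ('a \<times> 'a) \<times> bool \<Rightarrow> ennreal" where
  "wt \<epsilon> K w = ennreal (if snd w then \<epsilon> * indicator K (snd (fst w)) else 1 - \<epsilon> * indicator K (snd (fst w)))"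
definition gmap :: "('a \<times> 'a) \<times> bool \<Rightarrow> 'a \<times> 'a" where
  "gmap w = (if snd w then (snd (fst w), snd (fst w)) else fst w)"

lemma gmap_meas: "gmap \<in> measurable ((borel::('a::euclidean_space \<times> 'a) measure) \<Otimes>\<^sub>M count_space UNIV) borel"
proof -
  have d: "(\<lambda>z::'a\<times>'a. (snd z, snd z)) \<in> measurable borel borel"
    by (intro borel_measurable_continuous_onI continuous_intros)
  have s: "{w \<in> space ((borel::('a \<times> 'a) measure) \<Otimes>\<^sub>M count_space UNIV). snd w} = UNIV \<times> {True}"
    by (auto simp: space_pair_measure)
  have s2: "UNIV \<times> {True} \<in> sets ((borel::('a \<times> 'a) measure) \<Otimes>\<^sub>M count_space UNIV)"
    by (intro pair_measureI) auto
  show ?thesis unfolding gmap_def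
    by (rule measurable_If[OF measurable_comp[OF measurable_fst d, unfolded comp_def] measurable_fst])
       (use s s2 in simp)
qed

lemma wt_meas: "K \<in> sets borel \<Longrightarrow> wt \<epsilon> K \<in> borel_measurable ((borel::('a::euclidean_space \<times> 'a) measure) \<Otimes>\<^sub>M count_space UNIV)"
proof -
  assume K: "K \<in> sets borel"
  have i: "(\<lambda>w::('a\<times>'a)\<times>bool. indicator K (snd (fst w)) :: real) \<in> borel_measurable (borel \<Otimes>\<^sub>M count_space UNIV)"
    using measurable_comp[OF measurable_comp[OF measurable_fst meas_snd] borel_measurable_indicator[OF K]]
    by (simp add: comp_def)
  have s2: "UNIV \<times> {True} \<in> sets ((borel::('a \<times> 'a) measure) \<Otimes>\<^sub>M count_space UNIV)"
    by (intro pair_measureI) auto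
  have s3: "Collect snd = (UNIV \<times> {True} :: (('a\<times>'a)\<times>bool) set)" by auto
  have "(\<lambda>w::('a\<times>'a)\<times>bool. if snd w then \<epsilon> * indicator K (snd (fst w)) else 1 - \<epsilon> * indicator K (snd (fst w)) :: real) \<in> borel_measurable (borel \<Otimes>\<^sub>M count_space UNIV)"
    by (rule measurable_If) (use i s2 s3 in \<open>auto simp: space_pair_measure\<close>)
  then show ?thesis unfolding wt_def by (rule measurable_compose[OF _ measurable_ennreal])
qed
definition mod_plan :: "('a::euclidean_space \<times> 'a) measure \<Rightarrow> real \<Rightarrow> 'a set \<Rightarrow> ('a \<times> 'a) measure" where
  "mod_plan \<gamma> \<epsilon> K = distr (density (\<gamma> \<Otimes>\<^sub>M count_space UNIV) (wt \<epsilon> K)) borel gmap"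

lemma mod_plan_integral:
  fixes \<gamma> :: "('a::euclidean_space \<times> 'a) measure"
  assumes sg: "sets \<gamma> = sets borel" and K: "K \<in> sets borel"
    and \<phi>: "\<phi> \<in> borel_measurable borel"
  shows "(\<integral>\<^sup>+ z. \<phi> z \<partial>mod_plan \<gamma> \<epsilon> K) =
     (\<integral>\<^sup>+ z. ennreal (1 - \<epsilon> * indicator K (snd z)) * \<phi> z + ennreal (\<epsilon> * indicator K (snd z)) * \<phi> (snd z, snd z) \<partial>\<gamma>)"
proof -
  let ?W = "count_space (UNIV::bool set)"
  interpret W: sigma_finite_measure ?W by (rule sigma_finite_measure_count_space_countable) simp
  have sP: "sets (\<gamma> \<Otimes>\<^sub>M ?W) = sets (borel \<Otimes>\<^sub>M ?W)"
    by (rule sets_pair_measure_cong[OF sg refl])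
  have gm: "gmap \<in> measurable (\<gamma> \<Otimes>\<^sub>M ?W) borel"
    using gmap_meas measurable_cong_sets[OF sP refl] by blast
  have wm: "wt \<epsilon> K \<in> borel_measurable (\<gamma> \<Otimes>\<^sub>M ?W)"
    using wt_meas[OF K] measurable_cong_sets[OF sP refl] by blast
  have \<phi>g: "(\<lambda>w. \<phi> (gmap w)) \<in> borel_measurable (\<gamma> \<Otimes>\<^sub>M ?W)"
    using measurable_comp[OF gm \<phi>] by (simp add: comp_def)
  have "(\<integral>\<^sup>+ z. \<phi> z \<partial>mod_plan \<gamma> \<epsilon> K) = (\<integral>\<^sup>+ w. \<phi> (gmap w) \<partial>density (\<gamma> \<Otimes>\<^sub>M ?W) (wt \<epsilon> K))"
    unfolding mod_plan_def
  proof (rule nn_integral_distr)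
    show "gmap \<in> measurable (density (\<gamma> \<Otimes>\<^sub>M ?W) (wt \<epsilon> K)) borel"
      by (subst measurable_density_eq1) (rule gm)
    show "\<phi> \<in> borel_measurable (distr (density (\<gamma> \<Otimes>\<^sub>M ?W) (wt \<epsilon> K)) borel gmap)"
      by (subst measurable_distr_eq1) (rule \<phi>)
  qed
  also have "\<dots> = (\<integral>\<^sup>+ w. wt \<epsilon> K w * \<phi> (gmap w) \<partial>(\<gamma> \<Otimes>\<^sub>M ?W))"
    by (rule nn_integral_density[OF wm \<phi>g])
  also have "\<dots> = (\<integral>\<^sup>+ z. \<integral>\<^sup>+ b. wt \<epsilon> K (z, b) * \<phi> (gmap (z, b)) \<partial>?W \<partial>\<gamma>)"
  proof -
    have m: "(\<lambda>w. wt \<epsilon> K w * \<phi> (gmap w)) \<in> borel_measurable (\<gamma> \<Otimes>\<^sub>M ?W)"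
      by (rule borel_measurable_times_ennreal[OF wm \<phi>g])
    show ?thesis using W.nn_integral_fst[OF m] by simp
  qed
  also have "\<dots> = (\<integral>\<^sup>+ z. ennreal (1 - \<epsilon> * indicator K (snd z)) * \<phi> z + ennreal (\<epsilon> * indicator K (snd z)) * \<phi> (snd z, snd z) \<partial>\<gamma>)"
  proof (rule nn_integral_cong)
    fix z :: "'a \<times> 'a"
    have u: "(UNIV::bool set) = {True, False}" by auto
    show "(\<integral>\<^sup>+ b. wt \<epsilon> K (z, b) * \<phi> (gmap (z, b)) \<partial>?W) =
      ennreal (1 - \<epsilon> * indicator K (snd z)) * \<phi> z + ennreal (\<epsilon> * indicator K (snd z)) * \<phi> (snd z, snd z)"
      by (subst nn_integral_count_space_finite) (simp_all add: u wt_def gmap_def add.commute)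
  qed
  finally show ?thesis .
qed




lemma plan_basic:
  assumes "\<gamma> \<in> transport_plans \<mu> \<nu>"
  shows "sets \<gamma> = sets borel" "space \<gamma> = UNIV" "prob_space \<gamma>"
    "fst \<in> measurable \<gamma> borel" "snd \<in> measurable \<gamma> borel"
    "\<And>A. A \<in> sets borel \<Longrightarrow> emeasure \<gamma> (fst -` A) = emeasure \<mu> A"
    "\<And>A. A \<in> sets borel \<Longrightarrow> emeasure \<gamma> (snd -` A) = emeasure \<nu> A"
proof -
  have sg: "sets \<gamma> = sets borel" and d1: "distr \<gamma> borel fst = \<mu>" and d2: "distr \<gamma> borel snd = \<nu>"
    using assms by (auto simp: transport_plans_def)
  have sp: "space \<gamma> = UNIV" using sets_eq_imp_space_eq[OF sg] by simp
  have mf: "fst \<in> measurable \<gamma> borel" using meas_fst measurable_cong_sets[OF sg refl] by blast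
  have ms: "snd \<in> measurable \<gamma> borel" using meas_snd measurable_cong_sets[OF sg refl] by blast
  show "sets \<gamma> = sets borel" "space \<gamma> = UNIV" "fst \<in> measurable \<gamma> borel" "snd \<in> measurable \<gamma> borel" by fact+
  show "prob_space \<gamma>" using assms by (simp add: transport_plans_def)
  show "emeasure \<gamma> (fst -` A) = emeasure \<mu> A" if "A \<in> sets borel" for A
    using d1 emeasure_distr[OF mf, of A] that by (simp add: sp)
  show "emeasure \<gamma> (snd -` A) = emeasure \<nu> A" if "A \<in> sets borel" for A
    using d2 emeasure_distr[OF ms, of A] that by (simp add: sp)
qed

lemma mod_plan_props:
  fixes \<gamma> :: "('a::euclidean_space \<times> 'a) measure"
  assumes pl: "\<gamma> \<in> transport_plans \<mu> \<nu>" and K: "K \<in> sets borel" and e: "0 \<le> \<epsilon>" "\<epsilon> \<le> 1"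
  shows "mod_plan \<gamma> \<epsilon> K \<in> transport_plans (distr (mod_plan \<gamma> \<epsilon> K) borel fst) \<nu>"
    "(\<integral>\<^sup>+ z. ennreal (dist (fst z) (snd z) powr p) \<partial>mod_plan \<gamma> \<epsilon> K)
       + ennreal \<epsilon> * (\<integral>\<^sup>+ z. ennreal (indicator K (snd z) * dist (fst z) (snd z) powr p) \<partial>\<gamma>)
     = (\<integral>\<^sup>+ z. ennreal (dist (fst z) (snd z) powr p) \<partial>\<gamma>)"
    "\<And>A. A \<in> sets borel \<Longrightarrow> emeasure (distr (mod_plan \<gamma> \<epsilon> K) borel fst) A \<le> emeasure \<mu> A + ennreal \<epsilon> * emeasure \<nu> (A \<inter> K)"
proof -
  note pb = plan_basic[OF pl]
  interpret prob_space \<gamma> by (rule pb(3))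
  let ?M = "mod_plan \<gamma> \<epsilon> K"
  have sM: "sets ?M = sets borel" by (simp add: mod_plan_def)
  have spM: "space ?M = UNIV" using sets_eq_imp_space_eq[OF sM] by simp
  note I = mod_plan_integral[OF pb(1) K]
  have mg: "\<And>h. h \<in> borel_measurable borel \<Longrightarrow> h \<in> borel_measurable \<gamma>"
    using measurable_cong_sets[OF pb(1) refl] by blast
  have ik: "\<And>z. ennreal (1 - \<epsilon> * indicator K (snd z)) + ennreal (\<epsilon> * indicator K (snd z)) = 1"
    using e by (auto split: split_indicator simp flip: ennreal_plus)
  have "emeasure ?M (space ?M) = (\<integral>\<^sup>+ z. 1 \<partial>?M)" by simp
  also have "\<dots> = (\<integral>\<^sup>+ z. ennreal (1 - \<epsilon> * indicator K (snd z)) * 1 + ennreal (\<epsilon> * indicator K (snd z)) * 1 \<partial>\<gamma>)"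
    by (rule I) simp
  also have "\<dots> = (\<integral>\<^sup>+ z. 1 \<partial>\<gamma>)" by (simp only: mult_1_right ik)
  also have "\<dots> = 1" by (simp add: emeasure_space_1)
  finally have pM: "prob_space ?M" by (rule prob_spaceI)
  have "distr ?M borel snd = \<nu>"
  proof (rule measure_eqI)
    have sn: "sets \<nu> = sets borel"
      using pl by (auto simp: transport_plans_def)
    show "sets (distr ?M borel snd) = sets \<nu>" using sn by simp
    fix A assume "A \<in> sets (distr ?M borel snd)"
    then have A: "A \<in> sets borel" by simp
    have ms: "snd \<in> measurable ?M borel" using meas_snd measurable_cong_sets[OF sM refl] by blast
    have "emeasure (distr ?M borel snd) A = emeasure ?M (snd -` A)"
      using emeasure_distr[OF ms A] by (simp add: spM)
    also have "\<dots> = (\<integral>\<^sup>+ z. indicator (snd -` A) z \<partial>?M)"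
      using measurable_sets[OF ms A] by (simp add: spM)
    also have "\<dots> = (\<integral>\<^sup>+ z. ennreal (1 - \<epsilon> * indicator K (snd z)) * indicator (snd -` A) z + ennreal (\<epsilon> * indicator K (snd z)) * indicator (snd -` A) (snd z, snd z) \<partial>\<gamma>)"
      by (rule I) (use A in measurable)
    also have "\<dots> = (\<integral>\<^sup>+ z. indicator (snd -` A) z \<partial>\<gamma>)"
    proof (rule nn_integral_cong)
      fix z :: "'a \<times> 'a"
      have "indicator (snd -` A) (snd z, snd z) = (indicator (snd -` A) z :: ennreal)"
        by (simp add: indicator_def)
      then show "ennreal (1 - \<epsilon> * indicator K (snd z)) * indicator (snd -` A) z + ennreal (\<epsilon> * indicator K (snd z)) * indicator (snd -` A) (snd z, snd z) = indicator (snd -` A) z"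
        using ik[of z] by (simp flip: distrib_right)
    qed
    also have "\<dots> = emeasure \<gamma> (snd -` A)"
      using measurable_sets[OF pb(5) A] by (simp add: pb(2))
    also have "\<dots> = emeasure \<nu> A" by (rule pb(7)[OF A])
    finally show "emeasure (distr ?M borel snd) A = emeasure \<nu> A" .
  qed
  then show "?M \<in> transport_plans (distr ?M borel fst) \<nu>"
    using pM sM by (simp add: transport_plans_def)
  show "(\<integral>\<^sup>+ z. ennreal (dist (fst z) (snd z) powr p) \<partial>?M)
       + ennreal \<epsilon> * (\<integral>\<^sup>+ z. ennreal (indicator K (snd z) * dist (fst z) (snd z) powr p) \<partial>\<gamma>)
     = (\<integral>\<^sup>+ z. ennreal (dist (fst z) (snd z) powr p) \<partial>\<gamma>)"
  proof -
    have "(\<integral>\<^sup>+ z. ennreal (dist (fst z) (snd z) powr p) \<partial>?M) =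
      (\<integral>\<^sup>+ z. ennreal (1 - \<epsilon> * indicator K (snd z)) * ennreal (dist (fst z) (snd z) powr p) + ennreal (\<epsilon> * indicator K (snd z)) * ennreal (dist (fst (snd z, snd z)) (snd (snd z, snd z)) powr p) \<partial>\<gamma>)"
      by (rule I) measurable
    also have "\<dots> = (\<integral>\<^sup>+ z. ennreal ((1 - \<epsilon> * indicator K (snd z)) * dist (fst z) (snd z) powr p) \<partial>\<gamma>)"
      using e by (intro nn_integral_cong) (auto simp: ennreal_mult' split: split_indicator)
    finally have 1: "(\<integral>\<^sup>+ z. ennreal (dist (fst z) (snd z) powr p) \<partial>?M) = \<dots>" .
    have "ennreal \<epsilon> * (\<integral>\<^sup>+ z. ennreal (indicator K (snd z) * dist (fst z) (snd z) powr p) \<partial>\<gamma>)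
       = (\<integral>\<^sup>+ z. ennreal (\<epsilon> * indicator K (snd z) * dist (fst z) (snd z) powr p) \<partial>\<gamma>)"
    proof (subst nn_integral_cmult[symmetric])
      show "(\<lambda>z. ennreal (indicator K (snd z) * dist (fst z) (snd z) powr p)) \<in> borel_measurable \<gamma>"
        by (rule mg) (use K in measurable)
      show "(\<integral>\<^sup>+ z. ennreal \<epsilon> * ennreal (indicator K (snd z) * dist (fst z) (snd z) powr p) \<partial>\<gamma>) = (\<integral>\<^sup>+ z. ennreal (\<epsilon> * indicator K (snd z) * dist (fst z) (snd z) powr p) \<partial>\<gamma>)"
        using e by (intro nn_integral_cong) (simp add: ennreal_mult' mult.assoc)
    qed
    moreover have "(\<integral>\<^sup>+ z. ennreal ((1 - \<epsilon> * indicator K (snd z)) * dist (fst z) (snd z) powr p) \<partial>\<gamma>)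
        + (\<integral>\<^sup>+ z. ennreal (\<epsilon> * indicator K (snd z) * dist (fst z) (snd z) powr p) \<partial>\<gamma>)
       = (\<integral>\<^sup>+ z. ennreal ((1 - \<epsilon> * indicator K (snd z)) * dist (fst z) (snd z) powr p) + ennreal (\<epsilon> * indicator K (snd z) * dist (fst z) (snd z) powr p) \<partial>\<gamma>)"
      by (rule nn_integral_add[symmetric]) (rule mg, use K in measurable)+
    moreover have "\<dots> = (\<integral>\<^sup>+ z. ennreal (dist (fst z) (snd z) powr p) \<partial>\<gamma>)"
    proof (intro nn_integral_cong)
      fix z :: "'a \<times> 'a"
      define d where "d = dist (fst z) (snd z) powr p"
      have d0: "0 \<le> d" by (simp add: d_def)
      have i: "0 \<le> (indicator K (snd z)::real)" "(indicator K (snd z)::real) \<le> 1" by (auto split: split_indicator)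
      have a: "0 \<le> (1 - \<epsilon> * indicator K (snd z)) * d"
        using e i d0 by (intro mult_nonneg_nonneg) (auto simp: mult_le_one)
      have b: "0 \<le> \<epsilon> * indicator K (snd z) * d" using e i d0 by simp
      have "ennreal ((1 - \<epsilon> * indicator K (snd z)) * d) + ennreal (\<epsilon> * indicator K (snd z) * d)
          = ennreal ((1 - \<epsilon> * indicator K (snd z)) * d + \<epsilon> * indicator K (snd z) * d)"
        by (rule ennreal_plus[OF a b, symmetric])
      also have "\<dots> = ennreal d" by (simp add: algebra_simps)
      finally show "ennreal ((1 - \<epsilon> * indicator K (snd z)) * dist (fst z) (snd z) powr p) + ennreal (\<epsilon> * indicator K (snd z) * dist (fst z) (snd z) powr p) = ennreal (dist (fst z) (snd z) powr p)"
        by (simp add: d_def)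
    qed
    ultimately show ?thesis using 1 by simp
  qed
  show "emeasure (distr ?M borel fst) A \<le> emeasure \<mu> A + ennreal \<epsilon> * emeasure \<nu> (A \<inter> K)" if A: "A \<in> sets borel" for A
  proof -
    have AK: "A \<inter> K \<in> sets borel" using A K by auto
    have mf: "fst \<in> measurable ?M borel" using meas_fst measurable_cong_sets[OF sM refl] by blast
    have "emeasure (distr ?M borel fst) A = emeasure ?M (fst -` A)"
      using emeasure_distr[OF mf A] by (simp add: spM)
    also have "\<dots> = (\<integral>\<^sup>+ z. indicator (fst -` A) z \<partial>?M)"
      using measurable_sets[OF mf A] by (simp add: spM)
    also have "\<dots> = (\<integral>\<^sup>+ z. ennreal (1 - \<epsilon> * indicator K (snd z)) * indicator (fst -` A) z + ennreal (\<epsilon> * indicator K (snd z)) * indicator (fst -` A) (snd z, snd z) \<partial>\<gamma>)"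
      by (rule I) (use A in measurable)
    also have "\<dots> \<le> (\<integral>\<^sup>+ z. indicator (fst -` A) z + ennreal \<epsilon> * indicator (snd -` (A \<inter> K)) z \<partial>\<gamma>)"
    proof (rule nn_integral_mono)
      fix z :: "'a \<times> 'a"
      have 1: "ennreal (1 - \<epsilon> * indicator K (snd z)) \<le> 1" using e by (auto split: split_indicator)
      have "ennreal (1 - \<epsilon> * indicator K (snd z)) * indicator (fst -` A) z \<le> 1 * indicator (fst -` A) z"
        by (rule mult_right_mono[OF 1]) simp
      moreover have "ennreal (\<epsilon> * indicator K (snd z)) * indicator (fst -` A) (snd z, snd z) = ennreal \<epsilon> * indicator (snd -` (A \<inter> K)) z"
        using e by (auto split: split_indicator)
      ultimately show "ennreal (1 - \<epsilon> * indicator K (snd z)) * indicator (fst -` A) z + ennreal (\<epsilon> * indicator K (snd z)) * indicator (fst -` A) (snd z, snd z) \<le> indicator (fst -` A) z + ennreal \<epsilon> * indicator (snd -` (A \<inter> K)) z"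
        by (metis add_right_mono mult_1)
    qed
    also have "\<dots> = (\<integral>\<^sup>+ z. indicator (fst -` A) z \<partial>\<gamma>) + ennreal \<epsilon> * (\<integral>\<^sup>+ z. indicator (snd -` (A \<inter> K)) z \<partial>\<gamma>)"
    proof -
      have m1: "fst -` A \<in> sets \<gamma>" using measurable_sets[OF pb(4) A] by (simp add: pb(2))
      have m2: "snd -` (A \<inter> K) \<in> sets \<gamma>" using measurable_sets[OF pb(5) AK] by (simp add: pb(2))
      show ?thesis using m1 m2
        by (subst nn_integral_add) (auto simp: nn_integral_cmult)
    qed
    also have "\<dots> = emeasure \<mu> A + ennreal \<epsilon> * emeasure \<nu> (A \<inter> K)"
    proof -
      have m1: "fst -` A \<in> sets \<gamma>" using measurable_sets[OF pb(4) A] by (simp add: pb(2))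
      have m2: "snd -` (A \<inter> K) \<in> sets \<gamma>" using measurable_sets[OF pb(5) AK] by (simp add: pb(2))
      show ?thesis using m1 m2 pb(6)[OF A] pb(7)[OF AK] by simp
    qed
    finally show ?thesis .
  qed
qed




lemma f_meas:
  assumes "standing_f f" "u \<in> borel_measurable M" "\<forall>x. u x \<ge> 0"
  shows "(\<lambda>x. f (u x)) \<in> borel_measurable M"
proof -
  from assms(1) obtain f' where d: "\<forall>t\<ge>0. (f has_real_derivative f' t) (at t within {0..})"
    unfolding standing_f_def by blast
  have c: "continuous_on {0..} f" by (rule DERIV_continuous_on[where D=f']) (use d in auto)
  have "continuous_on UNIV (\<lambda>t. f (max 0 t))"
    by (rule continuous_on_compose2[OF c]) (auto intro: continuous_intros)
  then have "(\<lambda>t. f (max 0 t)) \<in> borel_measurable borel" by (rule borel_measurable_continuous_onI)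
  from measurable_compose[OF assms(2) this] have "(\<lambda>x. f (max 0 (u x))) \<in> borel_measurable M" .
  then show ?thesis using assms(3) by (simp add: max_absorb2)
qed

theorem lemma3p2:
  fixes \<Omega> :: "'a::euclidean_space set" and p :: real and f :: "real \<Rightarrow> real"
    and \<nu> \<nu>s \<mu> :: "'a measure" and v u :: "'a \<Rightarrow> real"
  assumes "bounded_domain \<Omega>" and "p \<ge> 1" and "standing_f f"
    and "\<nu> \<in> probs_on \<Omega>"
    and "sets \<nu>s = sets borel" and "singular_lebesgue \<nu>s"
    and "v \<in> borel_measurable lborel"
    and "\<exists>C. AE x in lborel. x \<in> \<Omega> \<longrightarrow> \<bar>v x\<bar> \<le> C"
    and "AE x in lborel. x \<in> \<Omega> \<longrightarrow> v x > 0"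
    and "\<forall>A \<in> sets borel. emeasure \<nu> A =
            emeasure \<nu>s A + (\<integral>\<^sup>+ x. indicator (A \<inter> \<Omega>) x * ennreal (v x) \<partial>lborel)"
    and "u \<in> borel_measurable lborel" and "\<forall>x. u x \<ge> 0"
    and "\<mu> = density lborel (\<lambda>x. ennreal (u x))"
    and "\<mu> \<in> probs_on \<Omega>"
    and "\<forall>\<mu>' \<in> probs_on \<Omega>. functional p f \<Omega> \<nu> \<mu> \<le> functional p f \<Omega> \<nu> \<mu>'"
  shows "AE x in lborel. x \<in> \<Omega> \<longrightarrow> u x > 0"
proof (rule ccontr)
  assume neg: "\<not> (AE x in lborel. x \<in> \<Omega> \<longrightarrow> u x > 0)"
  note A = assms
  have bd: "bounded \<Omega>" using A(1) by (simp add: bounded_domain_def)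
  obtain U where U: "open U" "U \<noteq> {}" "\<Omega> = closure U" using A(1) by (auto simp: bounded_domain_def)
  have \<Omega>b[measurable]: "\<Omega> \<in> sets borel" using U(3) by simp
  have p0: "p \<ge> 0" using A(2) by simp
  note fp = f_props[OF A(3)]
  have sm: "sets \<mu> = sets borel" and pm: "prob_space \<mu>" and mu0: "emeasure \<mu> (UNIV - \<Omega>) = 0"
    using A(14) by (auto simp: probs_on_def)
  have sn: "sets \<nu> = sets borel" and pn: "prob_space \<nu>"
    using A(4) by (auto simp: probs_on_def)
  obtain N where N: "N \<in> sets borel" "N \<in> null_sets lborel" "emeasure \<nu>s (UNIV - N) = 0"
    using A(6) by (auto simp: singular_lebesgue_def)
  obtain C where C: "AE x in lborel. x \<in> \<Omega> \<longrightarrow> \<bar>v x\<bar> \<le> C" using A(8) by blast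
  define C1 where "C1 = max C 0 + 1"
  have C1: "C1 > 0" "C \<le> C1" by (auto simp: C1_def)
  have um[measurable]: "u \<in> borel_measurable borel" using A(11) by simp
  have vm[measurable]: "v \<in> borel_measurable borel" using A(7) by simp
  have mu_eq: "\<And>B. B \<in> sets borel \<Longrightarrow> emeasure \<mu> B = (\<integral>\<^sup>+ x. ennreal (u x) * indicator B x \<partial>lborel)"
    using A(13) by (simp add: emeasure_density)

  have Fen_mu: "Fen f \<Omega> \<mu> = (\<integral>\<^sup>+ x. indicator \<Omega> x * ennreal (f (u x)) \<partial>lborel)"
  proof -
    let ?S = "{u. u \<in> borel_measurable lborel \<and> (\<forall>x. u x \<ge> 0) \<and> \<mu> = density lborel (\<lambda>x. ennreal (u x))}"
    have uS: "u \<in> ?S" using A(11,12,13) by auto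
    have eq: "(\<integral>\<^sup>+ x. indicator \<Omega> x * ennreal (f (u2 x)) \<partial>lborel) = (\<integral>\<^sup>+ x. indicator \<Omega> x * ennreal (f (u x)) \<partial>lborel)" if u2: "u2 \<in> ?S" for u2
    proof -
      have u2m: "u2 \<in> borel_measurable lborel" and u2p: "\<And>x. u2 x \<ge> 0" and u2d: "\<mu> = density lborel (\<lambda>x. ennreal (u2 x))"
        using u2 by auto
      have "density lborel (\<lambda>x. ennreal (u x)) = density lborel (\<lambda>x. ennreal (u2 x))" using u2d A(13) by simp
      moreover have "(\<lambda>x. ennreal (u x)) \<in> borel_measurable lborel" using A(11) by measurable
      moreover have "(\<lambda>x. ennreal (u2 x)) \<in> borel_measurable lborel" using u2m by measurable
      ultimately have "AE x in lborel. ennreal (u x) = ennreal (u2 x)"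
        using sigma_finite_measure.density_unique[OF sigma_finite_lborel] by blast
      then have "AE x in lborel. u x = u2 x"
      proof eventually_elim
        case (elim x) then show ?case using A(12) u2p[of x] by (simp add: ennreal_inj)
      qed
      then show ?thesis by (intro nn_integral_cong_AE) (auto elim: eventually_mono)
    qed
    show ?thesis unfolding Fen_def
    proof (rule antisym)
      show "(INF u\<in>?S. \<integral>\<^sup>+ x. indicator \<Omega> x * ennreal (f (u x)) \<partial>lborel) \<le> (\<integral>\<^sup>+ x. indicator \<Omega> x * ennreal (f (u x)) \<partial>lborel)"
        by (rule INF_lower[OF uS])
      show "(\<integral>\<^sup>+ x. indicator \<Omega> x * ennreal (f (u x)) \<partial>lborel) \<le> (INF u\<in>?S. \<integral>\<^sup>+ x. indicator \<Omega> x * ennreal (f (u x)) \<partial>lborel)"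
        using eq by (intro INF_greatest) simp
    qed
  qed
  have fin: "Tp p \<mu> \<nu> < \<infinity>" "Fen f \<Omega> \<mu> < \<infinity>"
  proof -
    have \<Omega>fin: "emeasure lborel \<Omega> < \<infinity>" using emeasure_bounded_finite[OF bd] .
    obtain x0 where "x0 \<in> U" using U(2) by auto
    then obtain e where e: "e > 0" "ball x0 e \<subseteq> U" using U(1) open_contains_ball by blast
    have bs: "ball x0 e \<subseteq> \<Omega>" using e U(3) closure_subset by blast
    have "0 < measure lborel (ball x0 e)" using e by simp
    moreover have "emeasure lborel (ball x0 e) = ennreal (measure lborel (ball x0 e))"
      using emeasure_lborel_ball_finite[of x0 e] by (intro emeasure_eq_ennreal_measure) simp
    moreover have "emeasure lborel (ball x0 e) \<le> emeasure lborel \<Omega>"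
      using bs by (intro emeasure_mono) auto
    ultimately have \<Omega>pos: "0 < emeasure lborel \<Omega>" by (metis ennreal_less_zero_iff order_less_le_trans)
    define m where "m = measure lborel \<Omega>"
    have em: "emeasure lborel \<Omega> = ennreal m" unfolding m_def using \<Omega>fin by (intro emeasure_eq_ennreal_measure) simp
    have m: "m > 0" using \<Omega>pos em by simp
    define uU where "uU = (\<lambda>x. indicator \<Omega> x / m :: real)"
    define \<mu>U where "\<mu>U = density lborel (\<lambda>x. ennreal (uU x))"
    have uUm: "uU \<in> borel_measurable lborel" unfolding uU_def by measurable
    have uUp: "\<forall>x. uU x \<ge> 0" using m by (simp add: uU_def)
    have uUeq: "\<And>x. ennreal (uU x) = ennreal (1/m) * indicator \<Omega> x"
      by (simp add: uU_def indicator_def)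
    have sU: "sets \<mu>U = sets borel" by (simp add: \<mu>U_def)
    have "emeasure \<mu>U (space \<mu>U) = (\<integral>\<^sup>+ x. ennreal (1/m) * indicator \<Omega> x \<partial>lborel)"
      by (simp add: \<mu>U_def emeasure_density uUeq)
    also have "\<dots> = ennreal (1/m) * ennreal m" using em by (simp add: nn_integral_cmult_indicator)
    also have "\<dots> = 1" using m by (simp flip: ennreal_mult)
    finally have pU: "prob_space \<mu>U" by (rule prob_spaceI)
    have "emeasure \<mu>U (UNIV - \<Omega>) = (\<integral>\<^sup>+ x. ennreal (uU x) * indicator (UNIV - \<Omega>) x \<partial>lborel)"
      unfolding \<mu>U_def by (rule emeasure_density) (use uUm in auto)
    also have "\<dots> = 0"
    proof -
      have "(\<lambda>x. ennreal (uU x) * indicator (UNIV - \<Omega>) x) = (\<lambda>x. 0)"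
        by (auto simp: uU_def indicator_def fun_eq_iff)
      then show ?thesis by simp
    qed
    finally have U0: "emeasure \<mu>U (UNIV - \<Omega>) = 0" .
    have UP: "\<mu>U \<in> probs_on \<Omega>" using sU pU U0 by (simp add: probs_on_def)
    have "Fen f \<Omega> \<mu>U \<le> (\<integral>\<^sup>+ x. indicator \<Omega> x * ennreal (f (uU x)) \<partial>lborel)"
      unfolding Fen_def by (rule INF_lower) (use uUm uUp in \<open>simp add: \<mu>U_def\<close>)
    also have "\<dots> = (\<integral>\<^sup>+ x. ennreal (f (1/m)) * indicator \<Omega> x \<partial>lborel)"
      by (intro nn_integral_cong) (simp add: uU_def indicator_def)
    also have "\<dots> = ennreal (f (1/m)) * ennreal m" using em by (simp add: nn_integral_cmult_indicator)
    also have "\<dots> < \<infinity>" by (simp add: ennreal_mult_less_top)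
    finally have FU: "Fen f \<Omega> \<mu>U < \<infinity>" .
    have TU: "Tp p \<mu>U \<nu> < \<infinity>"
      using Tp_bound[OF UP A(4) \<Omega>b bd p0] by (simp add: le_less_trans)
    have "functional p f \<Omega> \<nu> \<mu> \<le> functional p f \<Omega> \<nu> \<mu>U" using A(15) UP by blast
    also have "\<dots> < \<infinity>" using FU TU by (simp add: functional_def)
    finally have "functional p f \<Omega> \<nu> \<mu> < \<infinity>" .
    then show "Tp p \<mu> \<nu> < \<infinity>" "Fen f \<Omega> \<mu> < \<infinity>" by (auto simp: functional_def)
  qed
  obtain K a where K: "compact K" "K \<subseteq> \<Omega>" "K \<inter> N = {}" "0 < a"
     "\<And>x. x \<in> K \<Longrightarrow> u x = 0 \<and> a \<le> v x \<and> v x \<le> C1" "emeasure lborel K > 0"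
  proof -
    define Z where "Z = {x \<in> \<Omega>. u x \<le> 0}"
    have Zb[measurable]: "Z \<in> sets borel" unfolding Z_def by measurable
    have eZ: "{x \<in> space lborel. \<not> (x \<in> \<Omega> \<longrightarrow> 0 < u x)} = Z" by (auto simp: Z_def)
    have "(AE x in lborel. x \<in> \<Omega> \<longrightarrow> 0 < u x) \<longleftrightarrow> {x \<in> space lborel. \<not> (x \<in> \<Omega> \<longrightarrow> 0 < u x)} \<in> null_sets lborel"
      by (rule AE_iff_null) (simp only: eZ sets_lborel Zb)
    then have "{x \<in> space lborel. \<not> (x \<in> \<Omega> \<longrightarrow> 0 < u x)} \<notin> null_sets lborel" using neg by blast
    then have Znull: "Z \<notin> null_sets lborel" using eZ by metis
    define B1 where "B1 = {x \<in> \<Omega>. \<not> 0 < v x}"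
    define B2 where "B2 = {x \<in> \<Omega>. \<not> \<bar>v x\<bar> \<le> C}"
    have eB1: "{x \<in> space lborel. \<not> (x \<in> \<Omega> \<longrightarrow> 0 < v x)} = B1" by (auto simp: B1_def)
    have B1b: "B1 \<in> sets borel" unfolding B1_def by measurable
    have "(AE x in lborel. x \<in> \<Omega> \<longrightarrow> 0 < v x) \<longleftrightarrow> {x \<in> space lborel. \<not> (x \<in> \<Omega> \<longrightarrow> 0 < v x)} \<in> null_sets lborel"
      by (rule AE_iff_null) (simp only: eB1 sets_lborel B1b)
    then have "{x \<in> space lborel. \<not> (x \<in> \<Omega> \<longrightarrow> 0 < v x)} \<in> null_sets lborel" using A(9) by blast
    then have B1: "B1 \<in> null_sets lborel" using eB1 by metis
    have eB2: "{x \<in> space lborel. \<not> (x \<in> \<Omega> \<longrightarrow> \<bar>v x\<bar> \<le> C)} = B2" by (auto simp: B2_def)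
    have B2b: "B2 \<in> sets borel" unfolding B2_def by measurable
    have "(AE x in lborel. x \<in> \<Omega> \<longrightarrow> \<bar>v x\<bar> \<le> C) \<longleftrightarrow> {x \<in> space lborel. \<not> (x \<in> \<Omega> \<longrightarrow> \<bar>v x\<bar> \<le> C)} \<in> null_sets lborel"
      by (rule AE_iff_null) (simp only: eB2 sets_lborel B2b)
    then have "{x \<in> space lborel. \<not> (x \<in> \<Omega> \<longrightarrow> \<bar>v x\<bar> \<le> C)} \<in> null_sets lborel" using C by blast
    then have B2: "B2 \<in> null_sets lborel" using eB2 by metis
    define E where "E = Z \<inter> {x. 0 < v x \<and> v x \<le> C} - N"
    have "{x. 0 < v x \<and> v x \<le> C} \<in> sets borel" by measurable
    then have Eb[measurable]: "E \<in> sets borel" unfolding E_def using Zb N(1) by (intro sets.Diff sets.Int)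
    have ZE: "Z \<subseteq> E \<union> N \<union> B1 \<union> B2" by (auto simp: Z_def E_def B1_def B2_def)
    have Enn: "E \<notin> null_sets lborel"
    proof
      assume "E \<in> null_sets lborel"
      then have "E \<union> N \<union> B1 \<union> B2 \<in> null_sets lborel"
        by (intro null_sets.Un N(2) B1 B2)
      then have "Z \<in> null_sets lborel" by (rule null_sets_subset[OF _ _ ZE]) (simp add: Zb)
      then show False using Znull by simp
    qed
    define Ek where "Ek k = E \<inter> {x. 1 / real (Suc k) \<le> v x}" for k
    have "{x. 1 / real (Suc k) \<le> v x} \<in> sets borel" for k by measurable
    then have Ekb[measurable]: "Ek k \<in> sets borel" for k unfolding Ek_def using Eb by (intro sets.Int)
    have EU: "E = (\<Union>k. Ek k)"
    proof (intro equalityI subsetI)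
      fix x assume x: "x \<in> E"
      then have "0 < v x" by (auto simp: E_def)
      then obtain n where "inverse (real (Suc n)) < v x" using reals_Archimedean by blast
      then have "1 / real (Suc n) \<le> v x" by (simp add: divide_inverse)
      then show "x \<in> (\<Union>k. Ek k)" using x by (auto simp: Ek_def)
    qed (auto simp: Ek_def)
    obtain k where k: "Ek k \<notin> null_sets lborel"
    proof (rule ccontr)
      assume "\<not> thesis"
      then have "\<forall>k. Ek k \<in> null_sets lborel" using that by blast
      then have "(\<Union>k. Ek k) \<in> null_sets lborel" by (intro null_sets_UN) auto
      then show False using Enn EU by simp
    qed
    define a where "a = 1 / real (Suc k)"
    have a: "0 < a" by (simp add: a_def)
    have Ekpos: "0 < emeasure lborel (Ek k)" using k Ekb by (simp add: null_sets_def zero_less_iff_neq_zero)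
    have EkO: "Ek k \<subseteq> \<Omega>" by (auto simp: Ek_def E_def Z_def)
    have Ekfin: "emeasure lborel (Ek k) < \<infinity>"
      using emeasure_bounded_finite[OF bounded_subset[OF bd EkO]] .
    define M where "M = density lborel (indicator (Ek k))"
    have sM: "sets M = sets borel" by (simp add: M_def)
    have eM: "emeasure M B = emeasure lborel (Ek k \<inter> B)" if B: "B \<in> sets borel" for B
    proof -
      have "emeasure M B = (\<integral>\<^sup>+ x. indicator (Ek k) x * indicator B x \<partial>lborel)"
        unfolding M_def by (rule emeasure_density) (use B in auto)
      also have "\<dots> = (\<integral>\<^sup>+ x. indicator (Ek k \<inter> B) x \<partial>lborel)"
        by (intro nn_integral_cong) (simp add: indicator_def)
      also have "\<dots> = emeasure lborel (Ek k \<inter> B)" using B by simp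
      finally show ?thesis .
    qed
    have spM: "space M = UNIV" by (simp add: M_def)
    have "emeasure M (space M) \<noteq> \<infinity>" using eM[of UNIV] Ekfin by (simp add: spM)
    from inner_regular[OF sM this Ekb[of k]]
    have "emeasure M (Ek k) = (SUP K \<in> {K. K \<subseteq> Ek k \<and> compact K}. emeasure M K)" .
    moreover have "emeasure M (Ek k) = emeasure lborel (Ek k)" using eM[of "Ek k"] by simp
    ultimately have "0 < (SUP K \<in> {K. K \<subseteq> Ek k \<and> compact K}. emeasure M K)" using Ekpos by simp
    then obtain K where K: "K \<subseteq> Ek k" "compact K" "0 < emeasure M K" by (auto simp: less_SUP_iff)
    have "emeasure M K = emeasure lborel K"
      using eM[of K] K(1,2) by (simp add: compact_imp_closed borel_closed Int_absorb1)
    then have Kpos: "0 < emeasure lborel K" using K(3) by simp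
    show ?thesis
    proof (rule that[of K a])
      show "compact K" by fact
      show "0 < a" by fact
      show "0 < emeasure lborel K" by fact
      show "K \<subseteq> \<Omega>" using K(1) EkO by auto
      show "K \<inter> N = {}" using K(1) by (auto simp: Ek_def E_def)
      show "u x = 0 \<and> a \<le> v x \<and> v x \<le> C1" if "x \<in> K" for x
      proof -
        have x: "x \<in> Ek k" using K(1) that by auto
        have "u x \<le> 0" "0 \<le> u x" using x A(12) by (auto simp: Ek_def E_def Z_def)
        moreover have "a \<le> v x" "v x \<le> C" using x by (auto simp: Ek_def E_def a_def)
        ultimately show ?thesis using C1 by auto
      qed
    qed
  qed
  have Kb[measurable]: "K \<in> sets borel" using K(1) by (simp add: compact_imp_closed borel_closed)
  have Kne: "K \<noteq> {}" using K(6) by auto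
  define mK where "mK = measure lborel K"
  have mK: "mK > 0" "emeasure lborel K = ennreal mK"
  proof -
    show e: "emeasure lborel K = ennreal mK"
      unfolding mK_def using emeasure_compact_finite[OF K(1)] by (intro emeasure_eq_ennreal_measure) simp
    have "0 < ennreal mK" using K(6) e by metis
    then show "mK > 0" by (simp only: ennreal_less_zero_iff)
  qed
  have nuK: "\<And>B. B \<in> sets borel \<Longrightarrow> emeasure \<nu> (B \<inter> K) = (\<integral>\<^sup>+ x. indicator (B \<inter> K) x * ennreal (v x) \<partial>lborel)"
  proof -
    fix B :: "'a set" assume B: "B \<in> sets borel"
    have BK: "B \<inter> K \<in> sets borel" using B Kb by auto
    have "emeasure \<nu>s (B \<inter> K) \<le> emeasure \<nu>s (UNIV - N)"
      using K(3) N(1) A(5) by (intro emeasure_mono) auto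
    then have "emeasure \<nu>s (B \<inter> K) = 0" using N(3) by simp
    moreover have "B \<inter> K \<inter> \<Omega> = B \<inter> K" using K(2) by auto
    ultimately show "emeasure \<nu> (B \<inter> K) = (\<integral>\<^sup>+ x. indicator (B \<inter> K) x * ennreal (v x) \<partial>lborel)"
      using A(10) BK by simp
  qed
  define m0 where "m0 = a * mK"
  have m0: "m0 > 0" "ennreal m0 \<le> emeasure \<nu> K"
  proof -
    show "m0 > 0" using K(4) mK(1) by (simp add: m0_def)
    have "ennreal m0 = ennreal a * emeasure lborel K" using K(4) mK by (simp add: m0_def ennreal_mult)
    also have "\<dots> = (\<integral>\<^sup>+ x. ennreal a * indicator K x \<partial>lborel)" using Kb by (simp add: nn_integral_cmult_indicator)
    also have "\<dots> \<le> (\<integral>\<^sup>+ x. indicator K x * ennreal (v x) \<partial>lborel)"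
      using K(5) by (intro nn_integral_mono) (auto split: split_indicator intro: ennreal_leI)
    also have "\<dots> = emeasure \<nu> K" using nuK[of UNIV] by simp
    finally show "ennreal m0 \<le> emeasure \<nu> K" .
  qed
  obtain r where r: "r > 0" "emeasure \<mu> {x. infdist x K < r} < ennreal (m0 / 2)"
  proof -
    define Kr where "Kr n = {x. infdist x K < 1 / real (Suc n)}" for n
    have Krb: "Kr n \<in> sets borel" for n
    proof -
      have "open (Kr n)" unfolding Kr_def by (intro open_Collect_less continuous_intros)
      then show ?thesis by simp
    qed
    have dec: "decseq Kr"
    proof (rule decseq_SucI)
      fix n show "Kr (Suc n) \<subseteq> Kr n" unfolding Kr_def
        by (auto simp: frac_le elim!: less_le_trans)
    qed
    have capK: "(\<Inter>n. Kr n) = K"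
    proof (intro equalityI subsetI)
      fix x assume x: "x \<in> (\<Inter>n. Kr n)"
      have "infdist x K = 0"
      proof (rule ccontr)
        assume "infdist x K \<noteq> 0"
        then have "0 < infdist x K" using infdist_nonneg[of x K] by simp
        then obtain n where n: "inverse (real (Suc n)) < infdist x K" using reals_Archimedean by blast
        have "x \<in> Kr n" using x by auto
        then show False using n by (simp add: Kr_def divide_inverse)
      qed
      then have "x \<in> closure K" using in_closure_iff_infdist_zero[OF Kne] by simp
      then show "x \<in> K" using K(1) by (simp add: compact_imp_closed closure_closed)
    next
      fix x assume "x \<in> K"
      then show "x \<in> (\<Inter>n. Kr n)" by (simp add: Kr_def)
    qed
    have lim: "(\<lambda>n. emeasure \<mu> (Kr n)) \<longlonglongrightarrow> emeasure \<mu> (\<Inter>n. Kr n)"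
    proof (rule Lim_emeasure_decseq)
      show "range Kr \<subseteq> sets \<mu>" using Krb sm by auto
      show "decseq Kr" by fact
      show "emeasure \<mu> (Kr i) \<noteq> \<infinity>" for i
        using pm unfolding prob_space_def by (simp add: finite_measure.emeasure_finite)
    qed
    have "emeasure \<mu> K = (\<integral>\<^sup>+ x. ennreal (u x) * indicator K x \<partial>lborel)" by (rule mu_eq[OF Kb])
    also have "(\<lambda>x. ennreal (u x) * indicator K x) = (\<lambda>x. 0)"
      using K(5) by (auto split: split_indicator)
    finally have "emeasure \<mu> K = 0" by simp
    with lim capK have "(\<lambda>n. emeasure \<mu> (Kr n)) \<longlonglongrightarrow> 0" by simp
    moreover have "0 < ennreal (m0 / 2)" using m0(1) by simp
    ultimately have "\<forall>\<^sub>F n in sequentially. emeasure \<mu> (Kr n) < ennreal (m0 / 2)" by (rule order_tendstoD(2))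
    then obtain n where "emeasure \<mu> (Kr n) < ennreal (m0 / 2)" by (auto simp: eventually_sequentially)
    then show ?thesis by (intro that[of "1 / real (Suc n)"]) (simp_all add: Kr_def)
  qed
  define c0 where "c0 = r powr p * m0 / 2"
  have c0: "c0 > 0" using r m0 by (simp add: c0_def)
  have cgam: "\<And>\<gamma>. \<gamma> \<in> transport_plans \<mu> \<nu> \<Longrightarrow>
     ennreal c0 \<le> (\<integral>\<^sup>+ z. ennreal (indicator K (snd z) * dist (fst z) (snd z) powr p) \<partial>\<gamma>)"
  proof -
    fix \<gamma> assume pl: "\<gamma> \<in> transport_plans \<mu> \<nu>"
    note pb = plan_basic[OF pl]
    define Kr where "Kr = {x. infdist x K < r}"
    have Krb: "Kr \<in> sets borel"
    proof -
      have "open Kr" unfolding Kr_def by (intro open_Collect_less continuous_intros)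
      then show ?thesis by simp
    qed
    define c where "c = (\<integral>\<^sup>+ z. ennreal (indicator K (snd z) * dist (fst z) (snd z) powr p) \<partial>\<gamma>)"
    have mg: "\<And>h. h \<in> borel_measurable borel \<Longrightarrow> h \<in> borel_measurable \<gamma>"
      using measurable_cong_sets[OF pb(1) refl] by blast
    have s1: "snd -` K \<in> sets \<gamma>" using measurable_sets[OF pb(5) Kb] by (simp add: pb(2))
    have s2: "fst -` Kr \<in> sets \<gamma>" using measurable_sets[OF pb(4) Krb] by (simp add: pb(2))
    have pw: "ennreal (r powr p) * indicator (snd -` K) z \<le> ennreal (indicator K (snd z) * dist (fst z) (snd z) powr p) + ennreal (r powr p) * indicator (fst -` Kr) z" for z :: "'a \<times> 'a"
    proof (cases "snd z \<in> K \<and> fst z \<notin> Kr")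
      case True
      then have "r \<le> infdist (fst z) K" by (simp add: Kr_def)
      also have "\<dots> \<le> dist (fst z) (snd z)" using True infdist_le by blast
      finally have "r powr p \<le> dist (fst z) (snd z) powr p" using r(1) p0 by (intro powr_mono2) auto
      then show ?thesis using True by (simp add: ennreal_leI)
    next
      case False then show ?thesis by (auto split: split_indicator)
    qed
    have "ennreal (r powr p) * emeasure \<nu> K = (\<integral>\<^sup>+ z. ennreal (r powr p) * indicator (snd -` K) z \<partial>\<gamma>)"
      using s1 pb(7)[OF Kb] by (simp add: nn_integral_cmult_indicator)
    also have "\<dots> \<le> (\<integral>\<^sup>+ z. ennreal (indicator K (snd z) * dist (fst z) (snd z) powr p) + ennreal (r powr p) * indicator (fst -` Kr) z \<partial>\<gamma>)"
      by (rule nn_integral_mono) (rule pw)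
    also have "\<dots> = c + ennreal (r powr p) * emeasure \<mu> Kr"
    proof -
      have "(\<lambda>z. ennreal (indicator K (snd z) * dist (fst z) (snd z) powr p)) \<in> borel_measurable \<gamma>"
        by (rule mg) measurable
      moreover have "(\<lambda>z. ennreal (r powr p) * indicator (fst -` Kr) z) \<in> borel_measurable \<gamma>"
        using s2 by measurable
      ultimately show ?thesis using s2 pb(6)[OF Krb]
        by (simp add: nn_integral_add nn_integral_cmult_indicator c_def)
    qed
    finally have ineq: "ennreal (r powr p) * emeasure \<nu> K \<le> c + ennreal (r powr p) * emeasure \<mu> Kr" .
    have "ennreal c0 + ennreal c0 = ennreal (c0 + c0)" using c0 by (intro ennreal_plus[symmetric]) auto
    also have "c0 + c0 = r powr p * m0" by (simp add: c0_def)
    also have "ennreal (r powr p * m0) = ennreal (r powr p) * ennreal m0"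
      using m0(1) by (intro ennreal_mult) auto
    also have "\<dots> \<le> ennreal (r powr p) * emeasure \<nu> K" by (rule mult_left_mono[OF m0(2)]) simp
    also have "\<dots> \<le> c + ennreal (r powr p) * emeasure \<mu> Kr" by (rule ineq)
    also have "\<dots> \<le> c + ennreal (r powr p) * ennreal (m0 / 2)"
      using r(2) unfolding Kr_def by (intro add_left_mono mult_left_mono) auto
    also have "\<dots> = c + ennreal c0"
    proof -
      have "ennreal (r powr p) * ennreal (m0 / 2) = ennreal (r powr p * (m0 / 2))"
        using m0(1) by (intro ennreal_mult[symmetric]) auto
      then show ?thesis by (simp add: c0_def)
    qed
    finally have "ennreal c0 + ennreal c0 \<le> ennreal c0 + c" by (simp add: add.commute)
    then show "ennreal c0 \<le> c" by (simp add: ennreal_add_left_cancel_le)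
  qed
  obtain \<epsilon> where eps: "0 < \<epsilon>" "\<epsilon> \<le> 1" "mK * f (\<epsilon> * C1) \<le> \<epsilon> * c0 / 4"
  proof -
    define \<eta> where "\<eta> = c0 / (4 * (mK + 1) * C1)"
    have \<eta>: "\<eta> > 0" using c0 mK(1) C1(1) by (simp add: \<eta>_def)
    obtain d where d: "d > 0" "\<forall>t. 0 < t \<and> t < d \<longrightarrow> f t \<le> \<eta> * t" using fp(4)[OF \<eta>] by blast
    define \<epsilon> where "\<epsilon> = min (1/2) (d / (2 * C1))"
    have e: "0 < \<epsilon>" "\<epsilon> \<le> 1" using d(1) C1(1) by (auto simp: \<epsilon>_def)
    have t1: "0 < \<epsilon> * C1" using e C1(1) by simp
    have "\<epsilon> * C1 \<le> d / (2 * C1) * C1" using C1(1) by (intro mult_right_mono) (auto simp: \<epsilon>_def)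
    also have "\<dots> = d / 2" using C1(1) by simp
    also have "\<dots> < d" using d(1) by simp
    finally have t2: "\<epsilon> * C1 < d" .
    have "f (\<epsilon> * C1) \<le> \<eta> * (\<epsilon> * C1)" using d(2) t1 t2 by blast
    then have "mK * f (\<epsilon> * C1) \<le> mK * (\<eta> * (\<epsilon> * C1))" using mK(1) by (intro mult_left_mono) auto
    also have "mK * (\<eta> * (\<epsilon> * C1)) = \<epsilon> * c0 / 4 * (mK / (mK + 1))"
    proof -
      have "0 < C1 * 4 + C1 * (mK * 4)" using C1(1) mK(1) by (intro add_pos_pos mult_pos_pos) auto
      then show ?thesis using C1(1) mK(1) by (simp add: \<eta>_def field_split_simps)
    qed
    also have "\<dots> \<le> \<epsilon> * c0 / 4"
      using e c0 mK(1) by (intro mult_left_le) auto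
    finally show ?thesis using that e by blast
  qed
  define \<delta> where "\<delta> = \<epsilon> * c0 / 4"
  have \<delta>: "\<delta> > 0" using eps c0 by (simp add: \<delta>_def)
  obtain \<gamma> where \<gamma>: "\<gamma> \<in> transport_plans \<mu> \<nu>"
    "(\<integral>\<^sup>+ z. ennreal (dist (fst z) (snd z) powr p) \<partial>\<gamma>) < Tp p \<mu> \<nu> + ennreal \<delta>"
  proof -
    have "Tp p \<mu> \<nu> + 0 < Tp p \<mu> \<nu> + ennreal \<delta>"
      using fin(1) \<delta> by (simp only: ennreal_add_left_cancel_less) simp
    then have "(INF \<gamma> \<in> transport_plans \<mu> \<nu>. \<integral>\<^sup>+ z. ennreal (dist (fst z) (snd z) powr p) \<partial>\<gamma>) < Tp p \<mu> \<nu> + ennreal \<delta>"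
      by (simp add: Tp_def)
    then show ?thesis using that by (auto simp: INF_less_iff)
  qed
  define \<gamma>' where "\<gamma>' = mod_plan \<gamma> \<epsilon> K"
  define \<mu>' where "\<mu>' = distr \<gamma>' borel fst"
  note mp = mod_plan_props[OF \<gamma>(1) Kb less_imp_le[OF eps(1)] eps(2), folded \<gamma>'_def, folded \<mu>'_def]
  have pg': "prob_space \<gamma>'" and sg': "sets \<gamma>' = sets borel" using mp(1) by (auto simp: transport_plans_def)
  have s\<mu>': "sets \<mu>' = sets borel" by (simp add: \<mu>'_def)
  have \<mu>'P: "\<mu>' \<in> probs_on \<Omega>"
  proof -
    have "fst \<in> measurable \<gamma>' borel" using meas_fst measurable_cong_sets[OF sg' refl] by blast
    then have "prob_space \<mu>'" unfolding \<mu>'_def by (rule prob_space.prob_space_distr[OF pg'])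
    moreover have "emeasure \<mu>' (UNIV - \<Omega>) \<le> emeasure \<mu> (UNIV - \<Omega>) + ennreal \<epsilon> * emeasure \<nu> ((UNIV - \<Omega>) \<inter> K)"
      by (rule mp(3)) simp
    moreover have "(UNIV - \<Omega>) \<inter> K = {}" using K(2) by auto
    ultimately show ?thesis using s\<mu>' mu0 by (simp add: probs_on_def)
  qed
  have h1: "Tp p \<mu>' \<nu> + ennreal (\<epsilon> * c0) \<le> Tp p \<mu> \<nu> + ennreal \<delta>"
  proof -
    have "Tp p \<mu>' \<nu> \<le> (\<integral>\<^sup>+ z. ennreal (dist (fst z) (snd z) powr p) \<partial>\<gamma>')"
      unfolding Tp_def by (rule INF_lower[OF mp(1)])
    moreover have "ennreal (\<epsilon> * c0) \<le> ennreal \<epsilon> * (\<integral>\<^sup>+ z. ennreal (indicator K (snd z) * dist (fst z) (snd z) powr p) \<partial>\<gamma>)"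
      using eps(1) c0 cgam[OF \<gamma>(1)] by (simp add: ennreal_mult mult_left_mono)
    ultimately have "Tp p \<mu>' \<nu> + ennreal (\<epsilon> * c0) \<le> (\<integral>\<^sup>+ z. ennreal (dist (fst z) (snd z) powr p) \<partial>\<gamma>')
        + ennreal \<epsilon> * (\<integral>\<^sup>+ z. ennreal (indicator K (snd z) * dist (fst z) (snd z) powr p) \<partial>\<gamma>)"
      by (rule add_mono)
    also have "\<dots> = (\<integral>\<^sup>+ z. ennreal (dist (fst z) (snd z) powr p) \<partial>\<gamma>)" by (rule mp(2))
    also have "\<dots> \<le> Tp p \<mu> \<nu> + ennreal \<delta>" using \<gamma>(2) by simp
    finally show ?thesis .
  qed
  have h2: "Fen f \<Omega> \<mu>' \<le> Fen f \<Omega> \<mu> + ennreal \<delta>"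
  proof -
    have ac: "absolutely_continuous lborel \<mu>'"
      unfolding absolutely_continuous_def
    proof
      fix B :: "'a set" assume B: "B \<in> null_sets lborel"
      then have Bb: "B \<in> sets borel" by (simp add: null_sets_def)
      have "emeasure \<mu> B = 0" using mu_eq[OF Bb] nn_integral_null_set[OF B] by simp
      moreover have "emeasure \<nu> (B \<inter> K) = 0"
      proof -
        have BK: "B \<inter> K \<in> null_sets lborel" using B Kb by (intro null_sets_subset[OF B]) auto
        have "emeasure \<nu> (B \<inter> K) = (\<integral>\<^sup>+ x. ennreal (v x) * indicator (B \<inter> K) x \<partial>lborel)"
          using nuK[OF Bb] by (simp add: mult.commute)
        also have "\<dots> = 0" by (rule nn_integral_null_set[OF BK])
        finally show ?thesis .
      qed
      ultimately have "emeasure \<mu>' B \<le> 0" using mp(3)[OF Bb] by simp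
      then show "B \<in> null_sets \<mu>'" using Bb s\<mu>' by (simp add: null_sets_def)
    qed
    define w where "w = RN_deriv lborel \<mu>'"
    have dw: "density lborel w = \<mu>'"
      unfolding w_def by (rule sigma_finite_measure.density_RN_deriv[OF sigma_finite_lborel ac]) (simp add: s\<mu>')
    have wm[measurable]: "w \<in> borel_measurable borel" unfolding w_def
      using borel_measurable_RN_deriv[of lborel \<mu>'] by simp
    define g where "g x = ennreal (u x) + ennreal \<epsilon> * (indicator K x * ennreal (v x))" for x
    have gm[measurable]: "g \<in> borel_measurable borel" unfolding g_def by measurable
    have gfin: "integral\<^sup>N lborel g \<noteq> \<infinity>"
    proof -
      have "integral\<^sup>N lborel g = (\<integral>\<^sup>+ x. ennreal (u x) \<partial>lborel) + ennreal \<epsilon> * (\<integral>\<^sup>+ x. indicator K x * ennreal (v x) \<partial>lborel)"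
        unfolding g_def by (simp add: nn_integral_add nn_integral_cmult)
      also have "(\<integral>\<^sup>+ x. ennreal (u x) \<partial>lborel) = emeasure \<mu> UNIV" using mu_eq[of UNIV] by simp
      also have "(\<integral>\<^sup>+ x. indicator K x * ennreal (v x) \<partial>lborel) = emeasure \<nu> K" using nuK[of UNIV] by simp
      finally show ?thesis using pm pn unfolding prob_space_def
        by (simp add: finite_measure.emeasure_finite ennreal_mult_eq_top_iff)
    qed
    have le: "(\<integral>\<^sup>+ x. w x * indicator B x \<partial>lborel) \<le> (\<integral>\<^sup>+ x. g x * indicator B x \<partial>lborel)" if B: "B \<in> sets lborel" for B
    proof -
      have Bb: "B \<in> sets borel" using B by simp
      have "(\<integral>\<^sup>+ x. w x * indicator B x \<partial>lborel) = emeasure \<mu>' B"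
        using dw[symmetric] B by (simp add: emeasure_density)
      also have "\<dots> \<le> emeasure \<mu> B + ennreal \<epsilon> * emeasure \<nu> (B \<inter> K)" by (rule mp(3)[OF Bb])
      also have "\<dots> = (\<integral>\<^sup>+ x. ennreal (u x) * indicator B x \<partial>lborel) + ennreal \<epsilon> * (\<integral>\<^sup>+ x. indicator (B \<inter> K) x * ennreal (v x) \<partial>lborel)"
        using mu_eq[OF Bb] nuK[OF Bb] by simp
      also have "\<dots> = (\<integral>\<^sup>+ x. ennreal (u x) * indicator B x + ennreal \<epsilon> * (indicator (B \<inter> K) x * ennreal (v x)) \<partial>lborel)"
        using Bb by (simp add: nn_integral_add nn_integral_cmult)
      also have "\<dots> = (\<integral>\<^sup>+ x. g x * indicator B x \<partial>lborel)"
        by (intro nn_integral_cong) (simp add: g_def indicator_def)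
      finally show ?thesis .
    qed
    have AEle: "AE x in lborel. w x \<le> g x"
      by (rule AE_le_from_integrals[OF _ _ gfin le]) simp_all
    define u' where "u' x = enn2real (w x)" for x
    have u'm: "u' \<in> borel_measurable lborel" unfolding u'_def by measurable
    have u'p: "\<forall>x. u' x \<ge> 0" by (simp add: u'_def)
    have gfinx: "g x < \<top>" for x by (simp add: g_def ennreal_mult_less_top split: split_indicator)
    have du': "\<mu>' = density lborel (\<lambda>x. ennreal (u' x))"
    proof -
      have "density lborel w = density lborel (\<lambda>x. ennreal (u' x))"
      proof (rule density_cong)
        show "w \<in> borel_measurable lborel" by simp
        show "(\<lambda>x. ennreal (u' x)) \<in> borel_measurable lborel" using u'm by measurable
        show "AE x in lborel. w x = ennreal (u' x)" using AEle
        proof eventually_elim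
          case (elim x)
          then have "w x < \<top>" using gfinx[of x] by (rule le_less_trans)
          then show ?case by (simp add: u'_def)
        qed
      qed
      then show ?thesis using dw by simp
    qed
    have "Fen f \<Omega> \<mu>' \<le> (\<integral>\<^sup>+ x. indicator \<Omega> x * ennreal (f (u' x)) \<partial>lborel)"
      unfolding Fen_def by (rule INF_lower) (use u'm u'p du' in simp)
    also have "\<dots> \<le> (\<integral>\<^sup>+ x. indicator \<Omega> x * ennreal (f (u x)) + ennreal (f (\<epsilon> * C1)) * indicator K x \<partial>lborel)"
    proof (rule nn_integral_mono_AE)
      show "AE x in lborel. indicator \<Omega> x * ennreal (f (u' x)) \<le> indicator \<Omega> x * ennreal (f (u x)) + ennreal (f (\<epsilon> * C1)) * indicator K x"
        using AEle
      proof eventually_elim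
        case (elim x)
        have wfin: "w x < \<top>" using elim gfinx[of x] by (rule le_less_trans)
        show ?case
        proof (cases "x \<in> K")
          case True
          then have ux: "u x = 0" and vx: "v x \<le> C1" "0 < v x" using K(5)[of x] K(4) by auto
          have "g x = ennreal (\<epsilon> * v x)" using True ux eps(1) vx by (simp add: g_def ennreal_mult)
          also have "\<dots> \<le> ennreal (\<epsilon> * C1)" using eps(1) vx by (intro ennreal_leI mult_left_mono) auto
          finally have "w x \<le> ennreal (\<epsilon> * C1)" using elim by (rule order_trans[rotated])
          then have "u' x \<le> \<epsilon> * C1" unfolding u'_def using eps(1) C1(1) by (intro enn2real_leI) auto
          then have "f (u' x) \<le> f (\<epsilon> * C1)" using u'p by (intro fp(3)) auto
          then have "indicator \<Omega> x * ennreal (f (u' x)) \<le> ennreal (f (\<epsilon> * C1)) * indicator K x"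
            using True by (auto split: split_indicator intro: ennreal_leI)
          then show ?thesis by (rule order_trans) simp
        next
          case False
          then have "g x = ennreal (u x)" by (simp add: g_def)
          then have "w x \<le> ennreal (u x)" using elim by simp
          then have "u' x \<le> u x" unfolding u'_def using A(12) by (intro enn2real_leI) auto
          then have "f (u' x) \<le> f (u x)" using u'p by (intro fp(3)) auto
          then have "indicator \<Omega> x * ennreal (f (u' x)) \<le> indicator \<Omega> x * ennreal (f (u x))"
            by (auto split: split_indicator intro: ennreal_leI)
          then show ?thesis by (rule order_trans) simp
        qed
      qed
    qed
    also have "\<dots> = Fen f \<Omega> \<mu> + ennreal (f (\<epsilon> * C1)) * emeasure lborel K"
    proof -
      have fum: "(\<lambda>x. f (u x)) \<in> borel_measurable lborel" by (rule f_meas[OF A(3) A(11) A(12)])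
      have m1: "(\<lambda>x. indicator \<Omega> x * ennreal (f (u x))) \<in> borel_measurable lborel" using fum by measurable
      have m2: "(\<lambda>x. ennreal (f (\<epsilon> * C1)) * indicator K x) \<in> borel_measurable lborel" by measurable
      show ?thesis using Kb by (simp add: nn_integral_add[OF m1 m2] nn_integral_cmult_indicator Fen_mu)
    qed
    also have "ennreal (f (\<epsilon> * C1)) * emeasure lborel K = ennreal (mK * f (\<epsilon> * C1))"
      using mK fp(2)[of "\<epsilon> * C1"] eps(1) C1(1) by (simp add: ennreal_mult mult.commute)
    also have "\<dots> \<le> ennreal \<delta>" using eps(3) by (simp add: \<delta>_def ennreal_leI)
    finally show ?thesis by (simp add: add_left_mono)
  qed
  have h3: "Tp p \<mu> \<nu> + Fen f \<Omega> \<mu> \<le> Tp p \<mu>' \<nu> + Fen f \<Omega> \<mu>'"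
    using A(15) \<mu>'P by (auto simp: functional_def)
  have "(Tp p \<mu> \<nu> + Fen f \<Omega> \<mu>) + ennreal (\<epsilon> * c0) \<le> (Tp p \<mu>' \<nu> + ennreal (\<epsilon> * c0)) + Fen f \<Omega> \<mu>'"
    using h3 by (metis add.commute add.left_commute add_right_mono)
  also have "\<dots> \<le> (Tp p \<mu> \<nu> + ennreal \<delta>) + (Fen f \<Omega> \<mu> + ennreal \<delta>)"
    using h1 h2 by (rule add_mono)
  also have "\<dots> = (Tp p \<mu> \<nu> + Fen f \<Omega> \<mu>) + ennreal (2 * \<delta>)"
    using \<delta> by (simp add: ennreal_plus[symmetric] algebra_simps del: ennreal_plus)
  finally have "ennreal (\<epsilon> * c0) \<le> ennreal (2 * \<delta>)"
    using fin by (auto simp: ennreal_add_left_cancel_le)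
  then have "\<epsilon> * c0 \<le> 2 * \<delta>" using \<delta> by (simp add: ennreal_le_iff)
  then show False using eps c0 by (simp add: \<delta>_def)
qed


end
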